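(* Let $p\ge 3$ be an integer, let $x$ be a right vertex of $T_H$, and let $f$ be any $2p$ distance coloring of $T_H$. Then there exists a vertex $u\in\mathcal{F}_{x,p+1}$ such that $f(u)\notin f(V(D_x^{2p}))$.
   Context: $T_H$ is the infinite hexagonal grid with vertex set $\mathbb{Z}^2$: $(i,j)$ is adjacent to $(i,j\pm1)$, and $(i,j)$ is adjacent to $(i+1,j)$ iff $i+j$ is even; no other edges. A vertex $(i,j)$ with $i+j$ even is called a right vertex. $d(u,v)$ is graph distance. For $l\in\mathbb{N}$, an $l$ distance coloring is a map $f:V(T_H)\to\{1,\dots,n\}$ with $f(u)\ne f(v)$ for all distinct $u,v$ with $d(u,v)\le l$. For a vertex $x$ and integer $k\ge0$, $\mathcal{F}_{x,k}=\{u\in V(T_H): d(x,u)=k\}$. $D_x^{2p}$ is the subgraph of $T_H$ induced by $\{w: d(w,x)\le p\}$. *)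

theory Defs
  imports Main
begin

type_synonym vert = "int \<times> int"

definition hex_adj :: "vert \<Rightarrow> vert \<Rightarrow> bool" where
  "hex_adj u v \<longleftrightarrow>
     (fst u = fst v \<and> \<bar>snd u - snd v\<bar> = 1)
   \<or> (snd u = snd v \<and> fst v = fst u + 1 \<and> even (fst u + snd u))
   \<or> (snd u = snd v \<and> fst u = fst v + 1 \<and> even (fst v + snd v))"

inductive hex_walk :: "nat \<Rightarrow> vert \<Rightarrow> vert \<Rightarrow> bool" where
  refl: "hex_walk 0 u u"
| step: "hex_adj u w \<Longrightarrow> hex_walk n w v \<Longrightarrow> hex_walk (Suc n) u v"

text \<open>Graph distance (the grid is connected, so the least walk length exists).\<close>
definition hex_dist :: "vert \<Rightarrow> vert \<Rightarrow> nat" where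
  "hex_dist u v = (LEAST n. hex_walk n u v)"

definition right_vertex :: "vert \<Rightarrow> bool" where
  "right_vertex v \<longleftrightarrow> even (fst v + snd v)"

definition distance_coloring :: "nat \<Rightarrow> nat \<Rightarrow> (vert \<Rightarrow> nat) \<Rightarrow> bool" where
  "distance_coloring l n f \<longleftrightarrow>
     (\<forall>v. f v \<in> {1..n}) \<and>
     (\<forall>u v. u \<noteq> v \<and> hex_dist u v \<le> l \<longrightarrow> f u \<noteq> f v)"

definition sphere :: "vert \<Rightarrow> nat \<Rightarrow> vert set" where
  "sphere x k = {u. hex_dist x u = k}"

definition disk_verts :: "vert \<Rightarrow> nat \<Rightarrow> vert set" where
  "disk_verts x p = {w. hex_dist w x \<le> p}"

end

theory Submission
  imports Defs
begin


definition M :: "int \<Rightarrow> int \<Rightarrow> int \<Rightarrow> int" where "M di dj D = max (\<bar>di\<bar> + \<bar>dj\<bar>) \<bar>D\<bar>"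
definition par :: "vert \<Rightarrow> int" where "par v = (if even (fst v + snd v) then 0 else 1)"
definition phi :: "vert \<Rightarrow> int" where "phi v = 2 * fst v - par v"
definition LL :: "vert \<Rightarrow> vert \<Rightarrow> int" where
 "LL u v = M (fst v - fst u) (snd v - snd u) (phi v - phi u)"

lemma phi_pair: "phi (a,b) = 2*a - (if even (a+b) then 0 else 1)"
  by (simp add: phi_def par_def)

lemma right_step:
  fixes di dj pv k :: int
  assumes pv: "pv = 0 \<or> pv = 1" and k: "di + dj = 2*k + pv" and ne: "di \<noteq> 0 \<or> dj \<noteq> 0"
  shows "(2*di - pv \<ge> 1 \<and> di \<ge> 1 \<and> M (di-1) dj (2*di - pv-1) + 1 = M di dj (2*di - pv))
       \<or> (dj > 0 \<and> M di (dj-1) (2*di - pv+1) + 1 = M di dj (2*di - pv))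
       \<or> (dj \<le> 0 \<and> M di (dj+1) (2*di - pv+1) + 1 = M di dj (2*di - pv))"
proof -
  define D where "D = 2*di - pv"
  show ?thesis
  proof (cases "D \<ge> 1 \<and> di \<ge> 1")
    case True
    have "M (di-1) dj (D-1) + 1 = M di dj D" using True unfolding M_def by (auto simp: abs_if max_def split: if_split_asm)
    then show ?thesis using True unfolding D_def by blast
  next
    case False
    have D0: "D \<le> 0" using False pv unfolding D_def by presburger
    have D00: "D = 0 \<Longrightarrow> di = 0 \<and> (dj \<ge> 2 \<or> dj \<le> -2)" using pv k ne unfolding D_def by presburger
    have dj0: "dj = 0 \<Longrightarrow> di \<le> -1 \<and> (di \<le> -2 \<or> pv = 1)" using pv k ne D0 unfolding D_def by presburger
    show ?thesis
    proof (cases "dj > 0")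
      case True
      have "M di (dj-1) (D+1) + 1 = M di dj D" using True D0 D00 unfolding M_def by (auto simp: abs_if max_def split: if_split_asm)
      then show ?thesis using True unfolding D_def by blast
    next
      case False
      have "M di (dj+1) (D+1) + 1 = M di dj D" using False D0 D00 dj0 pv D_def unfolding M_def by (auto simp: abs_if max_def split: if_split_asm)
      then show ?thesis using False unfolding D_def by (intro disjI2 conjI) (simp_all add: not_less)
    qed
  qed
qed

lemma left_step:
  fixes di dj pv k :: int
  assumes pv: "pv = 0 \<or> pv = 1" and k: "di + dj = 2*k + pv - 1" and ne: "di \<noteq> 0 \<or> dj \<noteq> 0"
  shows "(2*di - pv + 1 \<le> -1 \<and> di \<le> -1 \<and> M (di+1) dj (2*di - pv + 1+1) + 1 = M di dj (2*di - pv + 1))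
       \<or> (dj > 0 \<and> M di (dj-1) (2*di - pv + 1-1) + 1 = M di dj (2*di - pv + 1))
       \<or> (dj \<le> 0 \<and> M di (dj+1) (2*di - pv + 1-1) + 1 = M di dj (2*di - pv + 1))"
proof -
  define D where "D = 2*di - pv + 1"
  show ?thesis
  proof (cases "D \<le> -1 \<and> di \<le> -1")
    case True
    have "M (di+1) dj (D+1) + 1 = M di dj D" using True unfolding M_def by (auto simp: abs_if max_def split: if_split_asm)
    then show ?thesis using True unfolding D_def by blast
  next
    case False
    have D0: "D \<ge> 0" using False pv unfolding D_def by presburger
    have D00: "D = 0 \<Longrightarrow> di = 0 \<and> (dj \<ge> 2 \<or> dj \<le> -2)" using pv k ne unfolding D_def by presburger
    have dj0: "dj = 0 \<Longrightarrow> di \<ge> 1 \<and> (di \<ge> 2 \<or> pv = 0)" using pv k ne D0 unfolding D_def by presburger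
    show ?thesis
    proof (cases "dj > 0")
      case True
      have "M di (dj-1) (D-1) + 1 = M di dj D" using True D0 D00 unfolding M_def by (auto simp: abs_if max_def split: if_split_asm)
      then show ?thesis using True unfolding D_def by blast
    next
      case False
      have "M di (dj+1) (D-1) + 1 = M di dj D" using False D0 D00 dj0 pv D_def unfolding M_def by (auto simp: abs_if max_def split: if_split_asm)
      then show ?thesis using False unfolding D_def by (intro disjI2 conjI) (simp_all add: not_less)
    qed
  qed
qed

lemma par01: "par v = 0 \<or> par v = 1" unfolding par_def by auto

lemma adj_cases: assumes "hex_adj u w"
  shows "\<bar>fst u - fst w\<bar> + \<bar>snd u - snd w\<bar> \<le> 1 \<and> \<bar>phi u - phi w\<bar> \<le> 1"
proof -
  obtain a b where u: "u = (a,b)" by fastforce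
  obtain c d where w: "w = (c,d)" by fastforce
  from assms have "(a = c \<and> (d = b + 1 \<or> d = b - 1)) \<or> (b = d \<and> c = a + 1 \<and> even (a+b)) \<or> (b = d \<and> a = c + 1 \<and> even (c+d))"
    unfolding u w hex_adj_def by auto
  then show ?thesis unfolding u w phi_def par_def
    by (auto simp: algebra_simps even_add)
qed

lemma LL_nonneg: "LL u v \<ge> 0" unfolding LL_def M_def by simp

lemma LL_sym: "LL u v = LL v u" unfolding LL_def M_def by (simp add: abs_minus_commute)

lemma LL_tri: "LL u w \<le> LL u v + LL v w"
proof -
  have a: "\<bar>fst w - fst u\<bar> \<le> \<bar>fst v - fst u\<bar> + \<bar>fst w - fst v\<bar>" by arith
  have b: "\<bar>snd w - snd u\<bar> \<le> \<bar>snd v - snd u\<bar> + \<bar>snd w - snd v\<bar>" by arith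
  have c: "\<bar>phi w - phi u\<bar> \<le> \<bar>phi v - phi u\<bar> + \<bar>phi w - phi v\<bar>" by arith
  let ?X1 = "\<bar>fst v - fst u\<bar> + \<bar>snd v - snd u\<bar>" and ?Y1 = "\<bar>phi v - phi u\<bar>"
  let ?X2 = "\<bar>fst w - fst v\<bar> + \<bar>snd w - snd v\<bar>" and ?Y2 = "\<bar>phi w - phi v\<bar>"
  have m: "?X1 \<le> max ?X1 ?Y1" "?Y1 \<le> max ?X1 ?Y1" "?X2 \<le> max ?X2 ?Y2" "?Y2 \<le> max ?X2 ?Y2" by simp_all
  show ?thesis unfolding LL_def M_def
    by (rule max.boundedI) (use a b c m in linarith)+
qed

lemma LL_refl: "LL u u = 0" unfolding LL_def M_def by simp

lemma LL_zero: "LL u v = 0 \<Longrightarrow> u = v"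
  unfolding LL_def M_def by (cases u; cases v) auto

lemma adj_LL: assumes "hex_adj u w" shows "LL u v \<le> LL w v + 1"
proof -
  have "LL u v \<le> LL u w + LL w v" by (rule LL_tri)
  moreover have "LL u w \<le> 1" using adj_cases[OF assms] unfolding LL_def M_def by (simp add: abs_minus_commute)
  ultimately show ?thesis by linarith
qed

lemma walk_LL: "hex_walk n u v \<Longrightarrow> LL u v \<le> int n"
proof (induction rule: hex_walk.induct)
  case (refl u) then show ?case by (simp add: LL_refl)
next
  case (step u w n v) then show ?case using adj_LL[OF step.hyps(1), of v] by simp
qed

lemma parity_link: fixes e a g b :: int shows "\<exists>k. (e - a) + (g - b) = 2*k + (if even (e+g) then 0 else 1) - (if even (a+b) then 0 else 1)"
proof -
  have "even ((e - a) + (g - b) - (if even (e+g) then 0 else 1) + (if even (a+b) then 0 else 1))"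
    by (cases "even (e+g)"; cases "even (a+b)") (simp_all; presburger)+
  then obtain k where "(e - a) + (g - b) - (if even (e+g) then 0 else 1) + (if even (a+b) then 0 else 1) = 2*k" by blast
  then show ?thesis by (intro exI[of _ k]) linarith
qed

lemma step_LL: assumes "u \<noteq> v" shows "\<exists>w. hex_adj u w \<and> LL w v + 1 = LL u v"
proof -
  obtain a b where u: "u = (a,b)" by fastforce
  obtain e g where v: "v = (e,g)" by fastforce
  define pv where "pv = (if even (e+g) then 0 else (1::int))"
  have pv01: "pv = 0 \<or> pv = 1" unfolding pv_def by auto
  have ne: "e - a \<noteq> 0 \<or> g - b \<noteq> 0" using assms u v by auto
  have phiv: "phi (e,g) = 2*e - pv" unfolding phi_pair pv_def by simp
  have LLw: "\<And>c d. LL (c,d) (e,g) = M (e - c) (g - d) (2*e - pv - phi (c,d))"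
    unfolding LL_def phiv by simp
  show ?thesis
  proof (cases "even (a+b)")
    case True
    obtain k where k: "(e - a) + (g - b) = 2*k + pv" using parity_link[of e a g b] True unfolding pv_def by auto
    have p0: "phi (a,b) = 2*a" using True by (simp add: phi_pair)
    have p1: "phi (a+1,b) = 2*a+1" "phi (a,b+1) = 2*a - 1" "phi (a,b-1) = 2*a - 1" using True by (simp_all add: phi_pair even_add)
    have adjs: "hex_adj (a,b) (a+1,b)" "hex_adj (a,b) (a,b+1)" "hex_adj (a,b) (a,b-1)"
      using True unfolding hex_adj_def by simp_all
    have e1: "2*e - pv - 2*a = 2*(e-a) - pv" by simp
    from right_step[OF pv01 k ne] show ?thesis
    proof (elim disjE conjE)
      assume "M (e - a - 1) (g - b) (2 * (e - a) - pv - 1) + 1 = M (e - a) (g - b) (2 * (e - a) - pv)"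
      hence "LL (a+1,b) (e,g) + 1 = LL (a,b) (e,g)" unfolding LLw p0 p1 by (simp add: algebra_simps)
      then show ?thesis using adjs u v by blast
    next
      assume "M (e - a) (g - b - 1) (2 * (e - a) - pv + 1) + 1 = M (e - a) (g - b) (2 * (e - a) - pv)"
      hence "LL (a,b+1) (e,g) + 1 = LL (a,b) (e,g)" unfolding LLw p0 p1 by (simp add: algebra_simps)
      then show ?thesis using adjs u v by blast
    next
      assume "M (e - a) (g - b + 1) (2 * (e - a) - pv + 1) + 1 = M (e - a) (g - b) (2 * (e - a) - pv)"
      hence "LL (a,b-1) (e,g) + 1 = LL (a,b) (e,g)" unfolding LLw p0 p1 by (simp add: algebra_simps)
      then show ?thesis using adjs u v by blast
    qed
  next
    case False
    obtain k where k: "(e - a) + (g - b) = 2*k + pv - 1" using parity_link[of e a g b] False unfolding pv_def by auto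
    have p0: "phi (a,b) = 2*a - 1" using False by (simp add: phi_pair)
    have p1: "phi (a-1,b) = 2*a - 2" "phi (a,b+1) = 2*a" "phi (a,b-1) = 2*a" using False by (simp_all add: phi_pair even_add)
    have adjs: "hex_adj (a,b) (a-1,b)" "hex_adj (a,b) (a,b+1)" "hex_adj (a,b) (a,b-1)"
      using False unfolding hex_adj_def by simp_all
    from left_step[OF pv01 k ne] show ?thesis
    proof (elim disjE conjE)
      assume "M (e - a + 1) (g - b) (2 * (e - a) - pv + 1 + 1) + 1 = M (e - a) (g - b) (2 * (e - a) - pv + 1)"
      hence "LL (a-1,b) (e,g) + 1 = LL (a,b) (e,g)" unfolding LLw p0 p1 by (simp add: algebra_simps)
      then show ?thesis using adjs u v by blast
    next
      assume "M (e - a) (g - b - 1) (2 * (e - a) - pv + 1 - 1) + 1 = M (e - a) (g - b) (2 * (e - a) - pv + 1)"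
      hence "LL (a,b+1) (e,g) + 1 = LL (a,b) (e,g)" unfolding LLw p0 p1 by (simp add: algebra_simps)
      then show ?thesis using adjs u v by blast
    next
      assume "M (e - a) (g - b + 1) (2 * (e - a) - pv + 1 - 1) + 1 = M (e - a) (g - b) (2 * (e - a) - pv + 1)"
      hence "LL (a,b-1) (e,g) + 1 = LL (a,b) (e,g)" unfolding LLw p0 p1 by (simp add: algebra_simps)
      then show ?thesis using adjs u v by blast
    qed
  qed
qed

lemma walk_exists: "LL u v = int n \<Longrightarrow> hex_walk n u v"
proof (induction n arbitrary: u)
  case 0
  then have "u = v" using LL_zero by simp
  then show ?case by (simp add: hex_walk.refl)
next
  case (Suc n)
  have "u \<noteq> v"
  proof
    assume "u = v"
    then have "LL u v = 0" by (simp add: LL_refl)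
    with Suc.prems show False by simp
  qed
  then obtain w where w: "hex_adj u w" "LL w v + 1 = LL u v" using step_LL by blast
  then have "LL w v = int n" using Suc.prems by simp
  then show ?case using Suc.IH w(1) hex_walk.step by blast
qed

lemma hex_dist_LL: "hex_dist u v = nat (LL u v)"
  unfolding hex_dist_def
proof (rule Least_equality)
  show "hex_walk (nat (LL u v)) u v" using walk_exists LL_nonneg by simp
next
  fix y assume "hex_walk y u v"
  then show "nat (LL u v) \<le> y" using walk_LL by fastforce
qed



lemma Meq: "M x y D = k \<Longrightarrow> \<bar>x\<bar>+\<bar>y\<bar> \<le> k \<and> \<bar>D\<bar> \<le> k \<and> (\<bar>x\<bar>+\<bar>y\<bar> = k \<or> \<bar>D\<bar> = k)"
  unfolding M_def by (auto simp: max_def split: if_split_asm)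
lemma Mle: "M x y D \<le> k \<Longrightarrow> \<bar>x\<bar>+\<bar>y\<bar> \<le> k \<and> \<bar>D\<bar> \<le> k"
  unfolding M_def by (auto simp: max_def split: if_split_asm)
lemma Mge: "M x y D \<ge> c \<Longrightarrow> \<bar>x\<bar>+\<bar>y\<bar> \<ge> c \<or> \<bar>D\<bar> \<ge> c"
  unfolding M_def by (auto simp: max_def split: if_split_asm)

lemma typeA:
  fixes i j s t k :: int
  assumes "\<bar>i\<bar>+\<bar>j\<bar> \<le> k" "\<bar>s\<bar>+\<bar>t\<bar> \<le> k-1" "\<bar>i-s\<bar>+\<bar>j-t\<bar> \<ge> 2*k-1"
  shows "\<bar>i\<bar>+\<bar>j\<bar> = k \<and> \<bar>s\<bar>+\<bar>t\<bar> = k-1 \<and> (i\<ge>0 \<and> s\<le>0 \<or> i\<le>0 \<and> s\<ge>0) \<and> (j\<ge>0 \<and> t\<le>0 \<or> j\<le>0 \<and> t\<ge>0)"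
proof -
  have a: "\<bar>i-s\<bar> \<le> \<bar>i\<bar> + \<bar>s\<bar>" "\<bar>j-t\<bar> \<le> \<bar>j\<bar> + \<bar>t\<bar>" by arith+
  have e: "\<bar>i\<bar>+\<bar>j\<bar> = k" "\<bar>s\<bar>+\<bar>t\<bar> = k-1" "\<bar>i-s\<bar> = \<bar>i\<bar> + \<bar>s\<bar>" "\<bar>j-t\<bar> = \<bar>j\<bar> + \<bar>t\<bar>"
    using a assms by linarith+
  have "i\<ge>0 \<and> s\<le>0 \<or> i\<le>0 \<and> s\<ge>0" using e(3) by arith
  moreover have "j\<ge>0 \<and> t\<le>0 \<or> j\<le>0 \<and> t\<ge>0" using e(4) by arith
  ultimately show ?thesis using e by blast
qed

lemma typeB:
  fixes a b k :: int
  assumes "\<bar>a\<bar> \<le> k" "\<bar>b\<bar> \<le> k-1" "\<bar>a-b\<bar> \<ge> 2*k-1"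
  shows "(a = k \<and> b = 1-k) \<or> (a = -k \<and> b = k-1)"
  using assms by arith



definition T1 :: "int \<Rightarrow> int \<Rightarrow> vert set" where
  "T1 h q = {(0, 2*h+q), (-h, -(h+q)), (h+q, -h)}"
definition T2 :: "int \<Rightarrow> int \<Rightarrow> vert set" where
  "T2 h q = {(0, -(2*h+q)), (-h, h+q), (h+q, h)}"

lemma L_AB:
  fixes h q i j i' j' s t :: int
  assumes q: "q = 0 \<or> q = 1" and h: "h \<ge> 2"
  and u: "\<bar>i\<bar>+\<bar>j\<bar> = 2*h+q" "\<bar>2*i - q\<bar> \<le> 2*h+q"
  and u': "\<bar>i'\<bar>+\<bar>j'\<bar> \<le> 2*h+q" "even (i'+j'-q)"
  and sg: "i\<ge>0 \<and> s\<le>0 \<or> i\<le>0 \<and> s\<ge>0" "j\<ge>0 \<and> t\<le>0 \<or> j\<le>0 \<and> t\<ge>0"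
  and tb: "(2*i'-q = 2*h+q \<and> 2*s-1+q = 1-(2*h+q)) \<or> (2*i'-q = -(2*h+q) \<and> 2*s-1+q = 2*h+q-1)"
  and far: "\<bar>i-i'\<bar>+\<bar>j-j'\<bar> \<ge> 4*h+2*q-1 \<or> \<bar>2*i-2*i'\<bar> \<ge> 4*h+2*q-1"
  shows "((i,j) \<in> T1 h q \<and> (i',j') \<in> T1 h q) \<or> ((i,j) \<in> T2 h q \<and> (i',j') \<in> T2 h q)"
  using tb
proof
  assume c: "2*i'-q = 2*h+q \<and> 2*s-1+q = 1-(2*h+q)"
  have i': "i' = h+q" using c by linarith
  have s: "s < 0" using c q h by linarith
  have i0: "i \<ge> 0" using sg(1) s by linarith
  have ile: "i \<le> h+q" using u(2) by arith
  have aj: "\<bar>j\<bar> = 2*h+q-i" using u(1) i0 by arith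
  have aj': "\<bar>j'\<bar> \<le> h" using u'(1) i' q by arith
  have N: "\<bar>i-i'\<bar>+\<bar>j-j'\<bar> \<ge> 4*h+2*q-1"
  proof -
    have "\<not> \<bar>2*i-2*i'\<bar> \<ge> 4*h+2*q-1" using i' i0 ile h q by arith
    then show ?thesis using far by blast
  qed
  have "\<bar>i-i'\<bar> = h+q-i" using i' ile by arith
  moreover have "\<bar>j-j'\<bar> \<le> \<bar>j\<bar> + \<bar>j'\<bar>" by arith
  ultimately have "2*i \<le> 1" using N aj aj' by linarith
  then have i00: "i = 0" using i0 by presburger
  show ?thesis
  proof (cases "j \<ge> 0")
    case True
    then have j: "j = 2*h+q" using aj i00 by arith
    have "j' \<le> -h+1" using N i00 i' j aj' h q by arith
    then have "j' = -h" using aj' u'(2) i' by presburger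
    then show ?thesis using i00 j i' unfolding T1_def T2_def by simp
  next
    case False
    then have j: "j = -(2*h+q)" using aj i00 by arith
    have "j' \<ge> h - 1" using N i00 i' j aj' h q by arith
    then have "j' = h" using aj' u'(2) i' by presburger
    then show ?thesis using i00 j i' unfolding T1_def T2_def by simp
  qed
next
  assume c: "2*i'-q = -(2*h+q) \<and> 2*s-1+q = 2*h+q-1"
  have i': "i' = -h" using c by linarith
  have s: "s > 0" using c q h by linarith
  have i0: "i \<le> 0" using sg(1) s by linarith
  have ile: "i \<ge> -h" using u(2) q by arith
  have aj: "\<bar>j\<bar> = 2*h+q+i" using u(1) i0 by arith
  have aj': "\<bar>j'\<bar> \<le> h+q" using u'(1) i' q by arith
  have N: "\<bar>i-i'\<bar>+\<bar>j-j'\<bar> \<ge> 4*h+2*q-1"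
  proof -
    have "\<not> \<bar>2*i-2*i'\<bar> \<ge> 4*h+2*q-1" using i' i0 ile h q by arith
    then show ?thesis using far by blast
  qed
  have "\<bar>i-i'\<bar> = i+h" using i' ile by arith
  moreover have "\<bar>j-j'\<bar> \<le> \<bar>j\<bar> + \<bar>j'\<bar>" by arith
  ultimately have "2*i \<ge> -1" using N aj aj' by linarith
  then have i00: "i = 0" using i0 by presburger
  show ?thesis
  proof (cases "j \<ge> 0")
    case True
    then have j: "j = 2*h+q" using aj i00 by arith
    have "j' \<le> -(h+q)+1" using N i00 i' j aj' h q by arith
    then have "j' = -(h+q)" using aj' u'(2) i' by presburger
    then show ?thesis using i00 j i' unfolding T1_def T2_def by simp
  next
    case False
    then have j: "j = -(2*h+q)" using aj i00 by arith
    have "j' \<ge> h+q - 1" using N i00 i' j aj' h q by arith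
    then have "j' = h+q" using aj' u'(2) i' by presburger
    then show ?thesis using i00 j i' unfolding T1_def T2_def by simp
  qed
qed


lemma L_BB:
  fixes h q i j i' j' s t :: int
  assumes q: "q = 0 \<or> q = 1" and h: "h \<ge> 2"
  and u: "\<bar>i\<bar>+\<bar>j\<bar> \<le> 2*h+q"
  and u': "\<bar>i'\<bar>+\<bar>j'\<bar> \<le> 2*h+q"
  and tb: "(2*i-q = 2*h+q \<and> 2*s-1+q = 1-(2*h+q)) \<or> (2*i-q = -(2*h+q) \<and> 2*s-1+q = 2*h+q-1)"
  and tb': "(2*i'-q = 2*h+q \<and> 2*s-1+q = 1-(2*h+q)) \<or> (2*i'-q = -(2*h+q) \<and> 2*s-1+q = 2*h+q-1)"
  and far: "\<bar>i-i'\<bar>+\<bar>j-j'\<bar> \<ge> 4*h+2*q-1 \<or> \<bar>2*i-2*i'\<bar> \<ge> 4*h+2*q-1"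
  shows False
proof -
  have ii: "i' = i" "i = h+q \<or> i = -h" using tb tb' h q by linarith+
  have "\<bar>j\<bar> \<le> h+q" "\<bar>j'\<bar> \<le> h+q" using ii u u' q h by arith+
  then show False using far ii h q by arith
qed

lemma L_AA:
  fixes h q i j i' j' s t :: int
  assumes q: "q = 0 \<or> q = 1" and h: "h \<ge> 2"
  and u: "\<bar>i\<bar>+\<bar>j\<bar> = 2*h+q" "\<bar>2*i - q\<bar> \<le> 2*h+q"
  and u': "\<bar>i'\<bar>+\<bar>j'\<bar> = 2*h+q" "\<bar>2*i' - q\<bar> \<le> 2*h+q"
  and w: "\<bar>s\<bar>+\<bar>t\<bar> = 2*h+q-1" "\<bar>2*s-1+q\<bar> \<le> 2*h+q-1"
  and sg: "i\<ge>0 \<and> s\<le>0 \<or> i\<le>0 \<and> s\<ge>0" "j\<ge>0 \<and> t\<le>0 \<or> j\<le>0 \<and> t\<ge>0"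
  and sg': "i'\<ge>0 \<and> s\<le>0 \<or> i'\<le>0 \<and> s\<ge>0" "j'\<ge>0 \<and> t\<le>0 \<or> j'\<le>0 \<and> t\<ge>0"
  and far: "\<bar>i-i'\<bar>+\<bar>j-j'\<bar> \<ge> 4*h+2*q-1 \<or> \<bar>2*i-2*i'\<bar> \<ge> 4*h+2*q-1"
  shows "((i,j) \<in> T1 h q \<and> (i',j') \<in> T1 h q) \<or> ((i,j) \<in> T2 h q \<and> (i',j') \<in> T2 h q)"
proof -
  have t0: "t \<noteq> 0"
  proof
    assume "t = 0"
    then have "\<bar>s\<bar> = 2*h+q-1" using w(1) by simp
    then show False using w(2) h q by arith
  qed
  have ib: "i \<le> h+q" "i \<ge> -h" "i' \<le> h+q" "i' \<ge> -h" using u(2) u'(2) q by arith+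
  have jj: "(j \<le> 0 \<and> j' \<le> 0) \<or> (j \<ge> 0 \<and> j' \<ge> 0)" using sg(2) sg'(2) t0 by linarith
  show ?thesis
  proof (cases "s = 0")
    case False
    have ii: "(i \<le> 0 \<and> i' \<le> 0) \<or> (i \<ge> 0 \<and> i' \<ge> 0)" using sg(1) sg'(1) False by linarith
    have False
    proof -
      from ii jj have "\<bar>i-i'\<bar>+\<bar>j-j'\<bar> \<le> 2*h+2*q \<and> \<bar>2*i-2*i'\<bar> \<le> 2*h+2*q"
      proof (elim disjE conjE)
        assume a: "i \<le> 0" "i' \<le> 0" "j \<le> 0" "j' \<le> 0"
        have "j = -(2*h+q) - i" "j' = -(2*h+q) - i'" using a u(1) u'(1) by linarith+
        then show ?thesis using a ib q by arith
      next
        assume a: "i \<le> 0" "i' \<le> 0" "j \<ge> 0" "j' \<ge> 0"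
        have "j = (2*h+q) + i" "j' = (2*h+q) + i'" using a u(1) u'(1) by linarith+
        then show ?thesis using a ib q by arith
      next
        assume a: "i \<ge> 0" "i' \<ge> 0" "j \<le> 0" "j' \<le> 0"
        have "j = -(2*h+q) + i" "j' = -(2*h+q) + i'" using a u(1) u'(1) by linarith+
        then show ?thesis using a ib q by arith
      next
        assume a: "i \<ge> 0" "i' \<ge> 0" "j \<ge> 0" "j' \<ge> 0"
        have "j = (2*h+q) - i" "j' = (2*h+q) - i'" using a u(1) u'(1) by linarith+
        then show ?thesis using a ib q by arith
      qed
      then show False using far h by linarith
    qed
    then show ?thesis by blast
  next
    case True
    have Nno: "\<not> \<bar>i-i'\<bar>+\<bar>j-j'\<bar> \<ge> 4*h+2*q-1"
    proof -
      from jj have jd: "j - j' = \<bar>i\<bar> - \<bar>i'\<bar> \<or> j - j' = \<bar>i'\<bar> - \<bar>i\<bar>"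
      proof (elim disjE conjE)
        assume "j \<le> 0" "j' \<le> 0"
        then have "\<bar>j\<bar> = -j" "\<bar>j'\<bar> = -j'" by simp_all
        then show ?thesis using u(1) u'(1) by linarith
      next
        assume "j \<ge> 0" "j' \<ge> 0"
        then have "\<bar>j\<bar> = j" "\<bar>j'\<bar> = j'" by simp_all
        then show ?thesis using u(1) u'(1) by linarith
      qed
      have "\<bar>i-i'\<bar> + \<bar>j-j'\<bar> \<le> 2*h+2*q"
      proof (cases "i \<ge> 0"; cases "i' \<ge> 0")
        assume "i \<ge> 0" "i' \<ge> 0"
        then have "\<bar>i\<bar> = i" "\<bar>i'\<bar> = i'" by simp_all
        then show ?thesis using jd ib q by smt
      next
        assume "i \<ge> 0" "\<not> i' \<ge> 0"
        then have "\<bar>i\<bar> = i" "\<bar>i'\<bar> = -i'" "\<bar>i-i'\<bar> = i - i'" by simp_all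
        then show ?thesis using jd ib q by smt
      next
        assume "\<not> i \<ge> 0" "i' \<ge> 0"
        then have "\<bar>i\<bar> = -i" "\<bar>i'\<bar> = i'" "\<bar>i-i'\<bar> = i' - i" by simp_all
        then show ?thesis using jd ib q by smt
      next
        assume "\<not> i \<ge> 0" "\<not> i' \<ge> 0"
        then have "\<bar>i\<bar> = -i" "\<bar>i'\<bar> = -i'" by simp_all
        then show ?thesis using jd ib q by smt
      qed
      then show ?thesis using h by linarith
    qed
    then have P: "\<bar>2*i-2*i'\<bar> \<ge> 4*h+2*q-1" using far by blast
    have "i - i' \<ge> 2*h+q \<or> i' - i \<ge> 2*h+q" using P by presburger
    then have ii: "(i = h+q \<and> i' = -h) \<or> (i' = h+q \<and> i = -h)" using ib by linarith
    have ai: "(\<bar>i\<bar> = h+q \<and> \<bar>i'\<bar> = h \<and> i = h+q \<and> i' = -h) \<or> (\<bar>i'\<bar> = h+q \<and> \<bar>i\<bar> = h \<and> i' = h+q \<and> i = -h)"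
      using ii h q by auto
    show ?thesis
    proof (cases "t > 0")
      case True
      then have "j \<le> 0" "j' \<le> 0" using sg(2) sg'(2) by linarith+
      then have "\<bar>j\<bar> = -j" "\<bar>j'\<bar> = -j'" by simp_all
      then have jv: "j = -(2*h+q) + \<bar>i\<bar>" "j' = -(2*h+q) + \<bar>i'\<bar>" using [[linarith_split_limit=0]] u(1) u'(1) by linarith+
      from ai show ?thesis
      proof (elim disjE conjE)
        assume a: "\<bar>i\<bar> = h+q" "\<bar>i'\<bar> = h" "i = h+q" "i' = -h"
        then have "j = -h" "j' = -(h+q)" using jv by (simp_all add: algebra_simps)
        then show ?thesis using a unfolding T1_def by simp
      next
        assume a: "\<bar>i'\<bar> = h+q" "\<bar>i\<bar> = h" "i' = h+q" "i = -h"
        then have "j' = -h" "j = -(h+q)" using jv by (simp_all add: algebra_simps)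
        then show ?thesis using a unfolding T1_def by simp
      qed
    next
      case False
      then have "j \<ge> 0" "j' \<ge> 0" using sg(2) sg'(2) t0 by linarith+
      then have "\<bar>j\<bar> = j" "\<bar>j'\<bar> = j'" by simp_all
      then have jv: "j = (2*h+q) - \<bar>i\<bar>" "j' = (2*h+q) - \<bar>i'\<bar>" using [[linarith_split_limit=0]] u(1) u'(1) by linarith+
      from ai show ?thesis
      proof (elim disjE conjE)
        assume a: "\<bar>i\<bar> = h+q" "\<bar>i'\<bar> = h" "i = h+q" "i' = -h"
        then have "j = h" "j' = h+q" using jv by (simp_all add: algebra_simps)
        then show ?thesis using a unfolding T2_def by simp
      next
        assume a: "\<bar>i'\<bar> = h+q" "\<bar>i\<bar> = h" "i' = h+q" "i = -h"
        then have "j' = h" "j = h+q" using jv by (simp_all add: algebra_simps)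
        then show ?thesis using a unfolding T2_def by simp
      qed
    qed
  qed
qed



lemma tri_lemma:
  fixes h q s t c d e :: int
  assumes q: "q = 0 \<or> q = 1" and h: "h \<ge> 2"
  and w: "\<bar>s\<bar>+\<bar>t\<bar> \<le> 2*h+q-1" "\<bar>2*s-1+q\<bar> \<le> 2*h+q-1"
  and f0: "\<bar>0-s\<bar>+\<bar>c-t\<bar> \<ge> 4*h+2*q-1 \<or> \<bar>(2*0-q)-(2*s-1+q)\<bar> \<ge> 4*h+2*q-1"
  and fR: "\<bar>(h+q)-s\<bar>+\<bar>d-t\<bar> \<ge> 4*h+2*q-1 \<or> \<bar>(2*(h+q)-q)-(2*s-1+q)\<bar> \<ge> 4*h+2*q-1"
  and fL: "\<bar>(-h)-s\<bar>+\<bar>e-t\<bar> \<ge> 4*h+2*q-1 \<or> \<bar>(2*(-h)-q)-(2*s-1+q)\<bar> \<ge> 4*h+2*q-1"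
  and cde: "(c = 2*h+q \<and> d = -h \<and> e = -(h+q)) \<or> (c = -(2*h+q) \<and> d = h \<and> e = h+q)"
  shows False
  using cde
proof (elim disjE conjE)
  assume c: "c = 2*h+q" and d: "d = -h" and e: "e = -(h+q)"
  have nB0: "\<not> \<bar>(2*0-q)-(2*s-1+q)\<bar> \<ge> 4*h+2*q-1" using q h w(2) by smt
  then have A0: "\<bar>0-s\<bar>+\<bar>c-t\<bar> \<ge> 4*h+2*q-1" using f0 by blast
  have t: "t < 0" using A0 c w q h by smt
  have "\<not> \<bar>(h+q)-s\<bar>+\<bar>d-t\<bar> \<ge> 4*h+2*q-1" using t d w q h by smt
  then have B1: "2*s-1+q = 1-(2*h+q)" using fR w q h by smt
  have "\<not> \<bar>(-h)-s\<bar>+\<bar>e-t\<bar> \<ge> 4*h+2*q-1" using t e w q h by smt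
  then have B2: "2*s-1+q = 2*h+q-1" using fL w q h by smt
  show False using B1 B2 h q by linarith
next
  assume c: "c = -(2*h+q)" and d: "d = h" and e: "e = h+q"
  have nB0: "\<not> \<bar>(2*0-q)-(2*s-1+q)\<bar> \<ge> 4*h+2*q-1" using q h w(2) by smt
  then have A0: "\<bar>0-s\<bar>+\<bar>c-t\<bar> \<ge> 4*h+2*q-1" using f0 by blast
  have t: "t > 0" using A0 c w q h by smt
  have "\<not> \<bar>(h+q)-s\<bar>+\<bar>d-t\<bar> \<ge> 4*h+2*q-1" using t d w q h by smt
  then have B1: "2*s-1+q = 1-(2*h+q)" using fR w q h by smt
  have "\<not> \<bar>(-h)-s\<bar>+\<bar>e-t\<bar> \<ge> 4*h+2*q-1" using t e w q h by smt
  then have B2: "2*s-1+q = 2*h+q-1" using fL w q h by smt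
  show False using B1 B2 h q by linarith
qed



lemma LL_pair: "LL (i,j) (s,t) = M (s-i) (t-j) (phi (s,t) - phi (i,j))" by (simp add: LL_def)
lemma phi00: "phi (0,0) = 0" by (simp add: phi_def par_def)

lemma LL0: "LL (0,0) (i,j) = M i j (phi (i,j))" by (simp add: LL_pair phi00)

lemma par_sphere:
  assumes "LL (0,0) (i,j) = k"
  shows "phi (i,j) = 2*i - (k mod 2)"
proof -
  define pu where "pu = (if even (i+j) then 0 else (1::int))"
  have ph: "phi (i,j) = 2*i - pu" unfolding pu_def phi_pair by simp
  have "\<bar>i\<bar>+\<bar>j\<bar> = k \<or> \<bar>2*i - pu\<bar> = k" using Meq[OF assms[unfolded LL0 ph]] by blast
  then have "pu = k mod 2" unfolding pu_def by (cases "even (i+j)") (simp_all; presburger)+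
  then show ?thesis using ph by simp
qed

lemma typeA2:
  fixes i j s t h q :: int
  assumes "\<bar>i\<bar>+\<bar>j\<bar> \<le> 2*h+q" "\<bar>s\<bar>+\<bar>t\<bar> \<le> 2*h+q-1" "\<bar>i-s\<bar>+\<bar>j-t\<bar> \<ge> 4*h+2*q-1"
  shows "\<bar>i\<bar>+\<bar>j\<bar> = 2*h+q \<and> \<bar>s\<bar>+\<bar>t\<bar> = 2*h+q-1 \<and> (i\<ge>0 \<and> s\<le>0 \<or> i\<le>0 \<and> s\<ge>0) \<and> (j\<ge>0 \<and> t\<le>0 \<or> j\<le>0 \<and> t\<ge>0)"
  using typeA[of i j "2*h+q" s t] assms by (simp add: algebra_simps)

lemma typeB2:
  fixes a b h q :: int
  assumes "\<bar>a\<bar> \<le> 2*h+q" "\<bar>b\<bar> \<le> 2*h+q-1" "\<bar>a-b\<bar> \<ge> 4*h+2*q-1"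
  shows "(a = 2*h+q \<and> b = 1-(2*h+q)) \<or> (a = -(2*h+q) \<and> b = 2*h+q-1)"
  using typeB[of a "2*h+q" b] assms by (simp add: algebra_simps)

lemma GLv:
  fixes h q :: int and u u' w :: vert
  assumes q: "q = 0 \<or> q = 1" and h: "h \<ge> 2"
  and Lu: "LL (0,0) u = 2*h+q" and Lu': "LL (0,0) u' = 2*h+q" and Lw: "LL (0,0) w = 2*h+q-1"
  and f1: "LL u w \<ge> 4*h+2*q-1" and f2: "LL u' w \<ge> 4*h+2*q-1" and f3: "LL u u' \<ge> 4*h+2*q-1"
  and ne: "u \<noteq> u'"
  shows "(u \<in> T1 h q \<and> u' \<in> T1 h q) \<or> (u \<in> T2 h q \<and> u' \<in> T2 h q)"
proof -
  obtain i j where u: "u = (i,j)" by fastforce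
  obtain i' j' where u': "u' = (i',j')" by fastforce
  obtain s t where w: "w = (s,t)" by fastforce
  have km: "(2*h+q) mod 2 = q" "(2*h+q-1) mod 2 = 1 - q" using q by presburger+
  have pu: "phi (i,j) = 2*i - q" using par_sphere[OF Lu[unfolded u]] km by simp
  have pu': "phi (i',j') = 2*i' - q" using par_sphere[OF Lu'[unfolded u']] km by simp
  have pw: "phi (s,t) = 2*s - 1 + q" using par_sphere[OF Lw[unfolded w]] km by simp
  have ev': "even (i'+j'-q)"
  proof -
    have "phi (i',j') = 2*i' - (if even (i'+j') then 0 else 1)" by (simp add: phi_pair)
    then show ?thesis using pu' q by (cases "even (i'+j')") (auto; presburger)+
  qed
  have ev: "even (i+j-q)"
  proof -
    have "phi (i,j) = 2*i - (if even (i+j) then 0 else 1)" by (simp add: phi_pair)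
    then show ?thesis using pu q by (cases "even (i+j)") (auto; presburger)+
  qed
  have U: "\<bar>i\<bar>+\<bar>j\<bar> \<le> 2*h+q" "\<bar>2*i-q\<bar> \<le> 2*h+q" "\<bar>i\<bar>+\<bar>j\<bar> = 2*h+q \<or> \<bar>2*i-q\<bar> = 2*h+q"
    using Meq[OF Lu[unfolded u LL0 pu]] by auto
  have U': "\<bar>i'\<bar>+\<bar>j'\<bar> \<le> 2*h+q" "\<bar>2*i'-q\<bar> \<le> 2*h+q" "\<bar>i'\<bar>+\<bar>j'\<bar> = 2*h+q \<or> \<bar>2*i'-q\<bar> = 2*h+q"
    using Meq[OF Lu'[unfolded u' LL0 pu']] by auto
  have W: "\<bar>s\<bar>+\<bar>t\<bar> \<le> 2*h+q-1" "\<bar>2*s-1+q\<bar> \<le> 2*h+q-1"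
    using Meq[OF Lw[unfolded w LL0 pw]] by auto
  have F1: "\<bar>i-s\<bar>+\<bar>j-t\<bar> \<ge> 4*h+2*q-1 \<or> \<bar>(2*i-q)-(2*s-1+q)\<bar> \<ge> 4*h+2*q-1"
    using Mge[OF f1[unfolded u w LL_pair pu pw]] by smt
  have F2: "\<bar>i'-s\<bar>+\<bar>j'-t\<bar> \<ge> 4*h+2*q-1 \<or> \<bar>(2*i'-q)-(2*s-1+q)\<bar> \<ge> 4*h+2*q-1"
    using Mge[OF f2[unfolded u' w LL_pair pu' pw]] by smt
  have F3: "\<bar>i-i'\<bar>+\<bar>j-j'\<bar> \<ge> 4*h+2*q-1 \<or> \<bar>2*i-2*i'\<bar> \<ge> 4*h+2*q-1"
    using Mge[OF f3[unfolded u u' LL_pair pu pu']] by (simp add: abs_minus_commute)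
  have F3': "\<bar>i'-i\<bar>+\<bar>j'-j\<bar> \<ge> 4*h+2*q-1 \<or> \<bar>2*i'-2*i\<bar> \<ge> 4*h+2*q-1"
    using F3 by (simp add: abs_minus_commute)
  have nee: "(i,j) \<noteq> (i',j')" using ne u u' by simp
  have C1: "(\<bar>i\<bar>+\<bar>j\<bar> = 2*h+q \<and> \<bar>s\<bar>+\<bar>t\<bar> = 2*h+q-1 \<and> (i\<ge>0 \<and> s\<le>0 \<or> i\<le>0 \<and> s\<ge>0) \<and> (j\<ge>0 \<and> t\<le>0 \<or> j\<le>0 \<and> t\<ge>0))
     \<or> ((2*i-q = 2*h+q \<and> 2*s-1+q = 1-(2*h+q)) \<or> (2*i-q = -(2*h+q) \<and> 2*s-1+q = 2*h+q-1))"
    using F1 typeA2[OF U(1) W(1)] typeB2[OF U(2) W(2)] by blast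
  have C2: "(\<bar>i'\<bar>+\<bar>j'\<bar> = 2*h+q \<and> \<bar>s\<bar>+\<bar>t\<bar> = 2*h+q-1 \<and> (i'\<ge>0 \<and> s\<le>0 \<or> i'\<le>0 \<and> s\<ge>0) \<and> (j'\<ge>0 \<and> t\<le>0 \<or> j'\<le>0 \<and> t\<ge>0))
     \<or> ((2*i'-q = 2*h+q \<and> 2*s-1+q = 1-(2*h+q)) \<or> (2*i'-q = -(2*h+q) \<and> 2*s-1+q = 2*h+q-1))"
    using F2 typeA2[OF U'(1) W(1)] typeB2[OF U'(2) W(2)] by blast
  have AA: "\<bar>i\<bar>+\<bar>j\<bar> = 2*h+q \<and> \<bar>s\<bar>+\<bar>t\<bar> = 2*h+q-1 \<and> (i\<ge>0 \<and> s\<le>0 \<or> i\<le>0 \<and> s\<ge>0) \<and> (j\<ge>0 \<and> t\<le>0 \<or> j\<le>0 \<and> t\<ge>0) \<Longrightarrow> \<bar>i'\<bar>+\<bar>j'\<bar> = 2*h+q \<and> \<bar>s\<bar>+\<bar>t\<bar> = 2*h+q-1 \<and> (i'\<ge>0 \<and> s\<le>0 \<or> i'\<le>0 \<and> s\<ge>0) \<and> (j'\<ge>0 \<and> t\<le>0 \<or> j'\<le>0 \<and> t\<ge>0) \<Longrightarrow> ((i,j) \<in> T1 h q \<and> (i',j') \<in> T1 h q) \<or> ((i,j) \<in> T2 h q \<and> (i',j') \<in> T2 h q)"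
    using L_AA[OF q h _ U(2) _ U'(2) _ W(2) _ _ _ _ F3] by blast
  have AB: "\<bar>i\<bar>+\<bar>j\<bar> = 2*h+q \<and> \<bar>s\<bar>+\<bar>t\<bar> = 2*h+q-1 \<and> (i\<ge>0 \<and> s\<le>0 \<or> i\<le>0 \<and> s\<ge>0) \<and> (j\<ge>0 \<and> t\<le>0 \<or> j\<le>0 \<and> t\<ge>0) \<Longrightarrow> (2*i'-q = 2*h+q \<and> 2*s-1+q = 1-(2*h+q)) \<or> (2*i'-q = -(2*h+q) \<and> 2*s-1+q = 2*h+q-1) \<Longrightarrow> ((i,j) \<in> T1 h q \<and> (i',j') \<in> T1 h q) \<or> ((i,j) \<in> T2 h q \<and> (i',j') \<in> T2 h q)"
    using L_AB[OF q h _ U(2) U'(1) ev' _ _ _ F3] by blast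
  have BA: "(2*i-q = 2*h+q \<and> 2*s-1+q = 1-(2*h+q)) \<or> (2*i-q = -(2*h+q) \<and> 2*s-1+q = 2*h+q-1) \<Longrightarrow> \<bar>i'\<bar>+\<bar>j'\<bar> = 2*h+q \<and> \<bar>s\<bar>+\<bar>t\<bar> = 2*h+q-1 \<and> (i'\<ge>0 \<and> s\<le>0 \<or> i'\<le>0 \<and> s\<ge>0) \<and> (j'\<ge>0 \<and> t\<le>0 \<or> j'\<le>0 \<and> t\<ge>0) \<Longrightarrow> ((i,j) \<in> T1 h q \<and> (i',j') \<in> T1 h q) \<or> ((i,j) \<in> T2 h q \<and> (i',j') \<in> T2 h q)"
    using L_AB[OF q h _ U'(2) U(1) ev _ _ _ F3'] by blast
  have BB: "(2*i-q = 2*h+q \<and> 2*s-1+q = 1-(2*h+q)) \<or> (2*i-q = -(2*h+q) \<and> 2*s-1+q = 2*h+q-1) \<Longrightarrow> (2*i'-q = 2*h+q \<and> 2*s-1+q = 1-(2*h+q)) \<or> (2*i'-q = -(2*h+q) \<and> 2*s-1+q = 2*h+q-1) \<Longrightarrow> ((i,j) \<in> T1 h q \<and> (i',j') \<in> T1 h q) \<or> ((i,j) \<in> T2 h q \<and> (i',j') \<in> T2 h q)"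
    using L_BB[OF q h U(1) U'(1) _ _ F3] by blast
  have "((i,j) \<in> T1 h q \<and> (i',j') \<in> T1 h q) \<or> ((i,j) \<in> T2 h q \<and> (i',j') \<in> T2 h q)"
    apply (rule disjE[OF C1]; rule disjE[OF C2])
       apply (erule (1) AA)
      apply (erule (1) AB)
     apply (erule (1) BA)
    apply (erule (1) BB)
    done
  then show ?thesis using u u' by simp
qed



definition P1 :: "int \<Rightarrow> int \<Rightarrow> vert set" where "P1 h q = (\<lambda>a. (a, 2*h+q - \<bar>a\<bar>)) ` {-h..h}"
definition P2 :: "int \<Rightarrow> int \<Rightarrow> vert set" where "P2 h q = (\<lambda>a. (a, -(2*h+q - \<bar>a\<bar>))) ` {-h..h}"
definition P3 :: "int \<Rightarrow> int \<Rightarrow> vert set" where "P3 h q = (\<lambda>b. (h+q, -h+2*b)) ` {1-q..h-1+q}"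
definition P4 :: "int \<Rightarrow> int \<Rightarrow> vert set" where "P4 h q = (\<lambda>b. (-h, -h+q+2*b)) ` {1-q..h-1}"
definition Sph :: "int \<Rightarrow> vert set" where "Sph r = {v. LL (0,0) v = r}"

lemma card_P1: "h \<ge> 0 \<Longrightarrow> card (P1 h q) = nat (2*h+1)"
  unfolding P1_def by (subst card_image) (auto simp: inj_on_def)
lemma card_P2: "h \<ge> 0 \<Longrightarrow> card (P2 h q) = nat (2*h+1)"
  unfolding P2_def by (subst card_image) (auto simp: inj_on_def)
lemma card_P3: "h \<ge> 1 \<Longrightarrow> q = 0 \<or> q = 1 \<Longrightarrow> card (P3 h q) = nat (h-1+2*q)"
  unfolding P3_def by (subst card_image) (auto simp: inj_on_def)
lemma card_P4: "h \<ge> 1 \<Longrightarrow> q = 0 \<or> q = 1 \<Longrightarrow> card (P4 h q) = nat (h-1+q)"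
  unfolding P4_def by (subst card_image) (auto simp: inj_on_def)

lemma fin_P: "finite (P1 h q)" "finite (P2 h q)" "finite (P3 h q)" "finite (P4 h q)"
  unfolding P1_def P2_def P3_def P4_def by auto

lemma disj_P:
  assumes "h \<ge> 1" "q = 0 \<or> q = 1"
  shows "P1 h q \<inter> P2 h q = {}" "(P1 h q \<union> P2 h q) \<inter> P3 h q = {}" "(P1 h q \<union> P2 h q \<union> P3 h q) \<inter> P4 h q = {}"
  using assms unfolding P1_def P2_def P3_def P4_def by (auto simp: image_def)

lemma card_Pall:
  assumes "h \<ge> 1" "q = 0 \<or> q = 1"
  shows "card (P1 h q \<union> P2 h q \<union> P3 h q \<union> P4 h q) = nat (6*h+3*q)"
proof -
  have "card (P1 h q \<union> P2 h q \<union> P3 h q \<union> P4 h q) = card (P1 h q \<union> P2 h q \<union> P3 h q) + card (P4 h q)"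
    by (rule card_Un_disjoint) (use fin_P disj_P[OF assms] in auto)
  also have "card (P1 h q \<union> P2 h q \<union> P3 h q) = card (P1 h q \<union> P2 h q) + card (P3 h q)"
    by (rule card_Un_disjoint) (use fin_P disj_P[OF assms] in auto)
  also have "card (P1 h q \<union> P2 h q) = card (P1 h q) + card (P2 h q)"
    by (rule card_Un_disjoint) (use fin_P disj_P[OF assms] in auto)
  finally have "card (P1 h q \<union> P2 h q \<union> P3 h q \<union> P4 h q) = nat (2*h+1) + nat (2*h+1) + nat (h-1+2*q) + nat (h-1+q)"
    using card_P1 card_P2 card_P3 card_P4 assms by simp
  moreover have "nat (2*h+1) + nat (2*h+1) + nat (h-1+2*q) + nat (h-1+q) = nat (6*h+3*q)"
    using assms by (auto simp: nat_add_distrib[symmetric])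
  ultimately show ?thesis by simp
qed


lemma phi_q: "even (i + j - q) \<Longrightarrow> q = 0 \<or> q = 1 \<Longrightarrow> phi (i,j) = 2*i - q"
  unfolding phi_pair by (cases "even (i+j)") (auto; presburger)+

lemma P_sub:
  assumes h: "h \<ge> 1" and q: "q = 0 \<or> q = 1"
  shows "P1 h q \<union> P2 h q \<union> P3 h q \<union> P4 h q \<subseteq> Sph (2*h+q)"
proof -
  have 1: "v \<in> Sph (2*h+q)" if vin: "v \<in> P1 h q" for v
  proof -
    obtain a where a0: "a \<in> {-h..h}" "v = (a, 2*h+q - \<bar>a\<bar>)" using vin unfolding P1_def by (rule imageE)
    have a: "v = (a, 2*h+q - \<bar>a\<bar>)" "-h \<le> a" "a \<le> h" using a0 by auto
    have ev: "even (a + (2*h+q - \<bar>a\<bar>) - q)" by (cases "a \<ge> 0") (simp_all add: abs_if)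
    have "phi v = 2*a - q" using phi_q[OF ev q] a(1) by simp
    then show ?thesis unfolding Sph_def using a h q by (simp add: LL0 M_def; smt)
  qed
  have 2: "v \<in> Sph (2*h+q)" if vin: "v \<in> P2 h q" for v
  proof -
    obtain a where a0: "a \<in> {-h..h}" "v = (a, -(2*h+q - \<bar>a\<bar>))" using vin unfolding P2_def by (rule imageE)
    have a: "v = (a, -(2*h+q - \<bar>a\<bar>))" "-h \<le> a" "a \<le> h" using a0 by auto
    have ev: "even (a + -(2*h+q - \<bar>a\<bar>) - q)" by (cases "a \<ge> 0") (simp_all add: abs_if)
    have "phi v = 2*a - q" using phi_q[OF ev q] a(1) by simp
    then show ?thesis unfolding Sph_def using a h q by (simp add: LL0 M_def; smt)
  qed
  have 3: "v \<in> Sph (2*h+q)" if vin: "v \<in> P3 h q" for v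
  proof -
    obtain b where a0: "b \<in> {1-q..h-1+q}" "v = (h+q, -h+2*b)" using vin unfolding P3_def by (rule imageE)
    have a: "v = (h+q, -h+2*b)" "1-q \<le> b" "b \<le> h-1+q" using a0 by auto
    have ev: "even (h+q + (-h+2*b) - q)" by simp
    have "phi v = 2*(h+q) - q" using phi_q[OF ev q] a(1) by simp
    then show ?thesis unfolding Sph_def using a h q by (simp add: LL0 M_def; smt)
  qed
  have 4: "v \<in> Sph (2*h+q)" if vin: "v \<in> P4 h q" for v
  proof -
    obtain b where a0: "b \<in> {1-q..h-1}" "v = (-h, -h+q+2*b)" using vin unfolding P4_def by (rule imageE)
    have a: "v = (-h, -h+q+2*b)" "1-q \<le> b" "b \<le> h-1" using a0 by auto
    have ev: "even (-h + (-h+q+2*b) - q)" by simp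
    have "phi v = 2*(-h) - q" using phi_q[OF ev q] a(1) by simp
    then show ?thesis unfolding Sph_def using a h q by (simp add: LL0 M_def; smt)
  qed
  show ?thesis using 1 2 3 4 by blast
qed


lemma Sph_sub:
  assumes h: "h \<ge> 1" and q: "q = 0 \<or> q = 1"
  shows "Sph (2*h+q) \<subseteq> P1 h q \<union> P2 h q \<union> P3 h q \<union> P4 h q"
proof
  fix v assume vin: "v \<in> Sph (2*h+q)"
  obtain i j where v: "v = (i,j)" by fastforce
  have L: "LL (0,0) (i,j) = 2*h+q" using vin v unfolding Sph_def by simp
  have km: "(2*h+q) mod 2 = q" using q by auto
  have pu: "phi (i,j) = 2*i - q" using par_sphere[OF L] km by simp
  have ev: "even (i+j-q)"
  proof -
    have "phi (i,j) = 2*i - (if even (i+j) then 0 else 1)" by (simp add: phi_pair)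
    then show ?thesis using pu q by (cases "even (i+j)") (auto; presburger)+
  qed
  have U: "\<bar>i\<bar>+\<bar>j\<bar> \<le> 2*h+q" "\<bar>2*i-q\<bar> \<le> 2*h+q" "\<bar>i\<bar>+\<bar>j\<bar> = 2*h+q \<or> \<bar>2*i-q\<bar> = 2*h+q"
    using Meq[OF L[unfolded LL0 pu]] by auto
  show "v \<in> P1 h q \<union> P2 h q \<union> P3 h q \<union> P4 h q"
  proof (cases "\<bar>i\<bar> \<le> h \<and> \<bar>i\<bar>+\<bar>j\<bar> = 2*h+q")
    case True
    show ?thesis
    proof (cases "j \<ge> 0")
      case True
      with \<open>\<bar>i\<bar> \<le> h \<and> \<bar>i\<bar>+\<bar>j\<bar> = 2*h+q\<close> have "v = (i, 2*h+q - \<bar>i\<bar>)" "i \<in> {-h..h}" using v by auto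
      then have "v \<in> P1 h q" unfolding P1_def by blast
      then show ?thesis by blast
    next
      case False
      with \<open>\<bar>i\<bar> \<le> h \<and> \<bar>i\<bar>+\<bar>j\<bar> = 2*h+q\<close> have "v = (i, -(2*h+q - \<bar>i\<bar>))" "i \<in> {-h..h}" using v by auto
      then have "v \<in> P2 h q" unfolding P2_def by blast
      then show ?thesis by blast
    qed
  next
    case nA: False
    have B: "2*i-q = 2*h+q \<or> 2*i-q = -(2*h+q)" using nA U h q by smt
    then show ?thesis
    proof
      assume b: "2*i-q = 2*h+q"
      have i: "i = h+q" using b by linarith
      have ej: "even (j + h)" using ev i by presburger
      then obtain b where jb: "j + h = 2*b" by blast
      have "\<bar>j\<bar> \<le> h" using U(1) i q h by smt
      moreover have "q = 0 \<Longrightarrow> \<bar>j\<bar> \<noteq> h" using nA i by smt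
      ultimately have "1-q \<le> b \<and> b \<le> h-1+q" using jb q by smt
      then have "v \<in> P3 h q" unfolding P3_def using v i jb by (auto simp: image_iff intro!: bexI[of _ b])
      then show ?thesis by blast
    next
      assume b: "2*i-q = -(2*h+q)"
      have i: "i = -h" using b by linarith
      have ej: "even (j + h - q)" using ev i by presburger
      then obtain b where jb: "j + h - q = 2*b" by blast
      have "\<bar>j\<bar> \<le> h+q" using U(1) i q h by smt
      moreover have "\<bar>j\<bar> \<noteq> h+q" using nA i h by smt
      ultimately have "1-q \<le> b \<and> b \<le> h-1" using jb q by smt
      then have "v \<in> P4 h q" unfolding P4_def using v i jb by (auto simp: image_iff intro!: bexI[of _ b])
      then show ?thesis by blast
    qed
  qed
qed

lemma card_Sph:
  assumes h: "h \<ge> 1" and q: "q = 0 \<or> q = 1"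
  shows "card (Sph (2*h+q)) = nat (6*h+3*q)" "finite (Sph (2*h+q))"
proof -
  have e: "Sph (2*h+q) = P1 h q \<union> P2 h q \<union> P3 h q \<union> P4 h q" using Sph_sub[OF assms] P_sub[OF assms] by blast
  show "card (Sph (2*h+q)) = nat (6*h+3*q)" unfolding e by (rule card_Pall[OF assms])
  show "finite (Sph (2*h+q))" unfolding e using fin_P by blast
qed



lemma tri_v:
  fixes h q c d e :: int and w :: vert
  assumes q: "q = 0 \<or> q = 1" and h: "h \<ge> 2"
  and Lw: "LL (0,0) w = 2*h+q-1"
  and cde: "(c = 2*h+q \<and> d = -h \<and> e = -(h+q)) \<or> (c = -(2*h+q) \<and> d = h \<and> e = h+q)"
  and f0: "LL (0,c) w \<ge> 4*h+2*q-1" and fR: "LL (h+q,d) w \<ge> 4*h+2*q-1" and fL: "LL (-h,e) w \<ge> 4*h+2*q-1"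
  shows False
proof -
  obtain s t where w: "w = (s,t)" by fastforce
  have km: "(2*h+q-1) mod 2 = 1 - q" using q by presburger
  have pw: "phi (s,t) = 2*s - 1 + q" using par_sphere[OF Lw[unfolded w]] km by simp
  have W: "\<bar>s\<bar>+\<bar>t\<bar> \<le> 2*h+q-1" "\<bar>2*s-1+q\<bar> \<le> 2*h+q-1"
    using Meq[OF Lw[unfolded w LL0 pw]] by auto
  have e0: "even (0 + c - q)" using cde q by auto
  have eR: "even ((h+q) + d - q)" using cde q by auto
  have eL: "even ((-h) + e - q)" using cde q by auto
  have p0: "phi (0,c) = 2*0 - q" by (rule phi_q[OF e0 q])
  have pR: "phi (h+q,d) = 2*(h+q) - q" by (rule phi_q[OF eR q])
  have pL: "phi (-h,e) = 2*(-h) - q" by (rule phi_q[OF eL q])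
  have F0: "\<bar>0-s\<bar>+\<bar>c-t\<bar> \<ge> 4*h+2*q-1 \<or> \<bar>(2*0-q)-(2*s-1+q)\<bar> \<ge> 4*h+2*q-1"
    using Mge[OF f0[unfolded w LL_pair p0 pw]] by smt
  have FR: "\<bar>(h+q)-s\<bar>+\<bar>d-t\<bar> \<ge> 4*h+2*q-1 \<or> \<bar>(2*(h+q)-q)-(2*s-1+q)\<bar> \<ge> 4*h+2*q-1"
    using Mge[OF fR[unfolded w LL_pair pR pw]] by smt
  have FL: "\<bar>(-h)-s\<bar>+\<bar>e-t\<bar> \<ge> 4*h+2*q-1 \<or> \<bar>(2*(-h)-q)-(2*s-1+q)\<bar> \<ge> 4*h+2*q-1"
    using Mge[OF fL[unfolded w LL_pair pL pw]] by smt
  show False by (rule tri_lemma[OF q h W F0 FR FL cde])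
qed

lemma T_in_Sph:
  assumes h: "h \<ge> 2" and q: "q = 0 \<or> q = 1"
  shows "T1 h q \<subseteq> Sph (2*h+q)" "T2 h q \<subseteq> Sph (2*h+q)"
proof -
  have pt: "LL (0,0) (a,b) = 2*h+q" if "even (a+b-q)" "max (\<bar>a\<bar>+\<bar>b\<bar>) \<bar>2*a-q\<bar> = 2*h+q" for a b
    using that phi_q[OF that(1) q] by (simp add: LL0 M_def)
  have "LL (0,0) (0, 2*h+q) = 2*h+q" by (rule pt) (use h q in auto)
  moreover have "LL (0,0) (-h, -(h+q)) = 2*h+q" by (rule pt) (use h q in auto)
  moreover have "LL (0,0) (h+q, -h) = 2*h+q" by (rule pt) (use h q in auto)
  moreover have "LL (0,0) (0, -(2*h+q)) = 2*h+q" by (rule pt) (use h q in auto)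
  moreover have "LL (0,0) (-h, h+q) = 2*h+q" by (rule pt) (use h q in auto)
  moreover have "LL (0,0) (h+q, h) = 2*h+q" by (rule pt) (use h q in auto)
  ultimately show "T1 h q \<subseteq> Sph (2*h+q)" "T2 h q \<subseteq> Sph (2*h+q)" unfolding T1_def T2_def Sph_def by auto
qed

lemma T_card:
  assumes h: "h \<ge> 2" and q: "q = 0 \<or> q = 1"
  shows "card (T1 h q) = 3" "card (T2 h q) = 3" "T1 h q \<inter> T2 h q = {}"
  using assms unfolding T1_def T2_def by auto



lemma phi_shift: "even (a+b) \<Longrightarrow> phi (a + i, b + j) = 2*a + phi (i,j)"
  unfolding phi_pair by (cases "even (i+j)") (auto; presburger)+

lemma LL_shift: "even (a+b) \<Longrightarrow> LL (a + i, b + j) (a + s, b + t) = LL (i,j) (s,t)"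
  unfolding LL_pair using phi_shift[of a b] by simp

theorem theorem1:
  fixes p n :: nat and x :: vert and f :: "vert \<Rightarrow> nat"
  assumes "p \<ge> 3" and "right_vertex x" and "distance_coloring (2 * p) n f"
  shows "\<exists>u \<in> sphere x (p + 1). f u \<notin> f ` disk_verts x p"
proof (rule ccontr)
  assume H0: "\<not> (\<exists>u \<in> sphere x (p + 1). f u \<notin> f ` disk_verts x p)"
  obtain a b where x: "x = (a,b)" by fastforce
  have eab: "even (a+b)" using assms(2) x unfolding right_vertex_def by simp
  define tau where "tau = (\<lambda>v::vert. (a + fst v, b + snd v))"
  define g where "g = (\<lambda>v. f (tau v))"
  have LLt: "LL (tau u) (tau v) = LL u v" for u v
    unfolding tau_def using LL_shift[OF eab, of "fst u" "snd u" "fst v" "snd v"] by simp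
  have tau0: "tau (0,0) = x" unfolding tau_def x by simp
  have tau_inj: "tau u = tau v \<Longrightarrow> u = v" for u v unfolding tau_def by (cases u; cases v) auto
  have col: "g u \<noteq> g v" if "u \<noteq> v" "LL u v \<le> 2 * int p" for u v
  proof -
    have "tau u \<noteq> tau v" using that(1) tau_inj by blast
    moreover have "hex_dist (tau u) (tau v) \<le> 2 * p" using that(2) unfolding hex_dist_LL LLt by simp
    ultimately show ?thesis using assms(3) unfolding distance_coloring_def g_def by blast
  qed
  define k :: int where "k = int p + 1"
  define h where "h = k div 2"
  define q where "q = k mod 2"
  have kq: "k = 2*h+q" "q = 0 \<or> q = 1" "h \<ge> 2" unfolding h_def q_def using assms(1) k_def by auto
  define h' where "h' = (k - 1) div 2"
  define q' where "q' = (k - 1) mod 2"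
  have kq': "k - 1 = 2*h'+q'" "q' = 0 \<or> q' = 1" "h' \<ge> 1" unfolding h'_def q'_def using assms(1) k_def by auto
  define S where "S = Sph k"
  define W where "W = Sph (k-1)"
  have farc: "2 * int p + 1 = 4*h+2*q-1" using kq k_def by simp
  have wit: "\<exists>w \<in> W. g u = g w" if uS: "u \<in> S" for u
  proof -
    have Lu: "LL (0,0) u = k" using uS unfolding S_def Sph_def by simp
    have "hex_dist x (tau u) = p + 1" unfolding hex_dist_LL tau0[symmetric] LLt Lu k_def by simp
    then have "tau u \<in> sphere x (p+1)" unfolding sphere_def by simp
    then have "f (tau u) \<in> f ` disk_verts x p" using H0 by blast
    then obtain w' where w': "hex_dist w' x \<le> p" "f (tau u) = f w'" unfolding disk_verts_def by auto
    define w where "w = (fst w' - a, snd w' - b)"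
    have tw: "tau w = w'" unfolding tau_def w_def by simp
    have Lw: "LL (0,0) w \<le> int p"
    proof -
      have "LL (0,0) w = LL w' x" using LLt[of "(0,0)" w] tau0 tw LL_sym by simp
      then show ?thesis using w'(1) unfolding hex_dist_LL by simp
    qed
    have guw: "g u = g w" unfolding g_def tw using w'(2) by simp
    have "u \<noteq> w"
    proof
      assume "u = w"
      then have "LL (0,0) u \<le> int p" using Lw by simp
      then show False using Lu k_def by simp
    qed
    then have "\<not> LL u w \<le> 2 * int p" using col guw by blast
    then have "LL u w > 2 * int p" by simp
    moreover have "LL u w \<le> LL u (0,0) + LL (0,0) w" by (rule LL_tri)
    ultimately have "LL (0,0) w = k - 1" using Lu Lw LL_sym[of u "(0,0)"] k_def by linarith
    then have "w \<in> W" unfolding W_def Sph_def by simp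
    then show ?thesis using guw by blast
  qed
  have far: "LL u w \<ge> 4*h+2*q-1" if "u \<in> S" "w \<in> W" "g u = g w" for u w
  proof -
    have "u \<noteq> w" using that(1,2) unfolding S_def W_def Sph_def by auto
    then have "\<not> LL u w \<le> 2 * int p" using col that(3) by blast
    then have "LL u w > 2 * int p" by simp
    then show ?thesis using farc by linarith
  qed
  have same: "(u \<in> T1 h q \<and> u' \<in> T1 h q) \<or> (u \<in> T2 h q \<and> u' \<in> T2 h q)"
    if su: "u \<in> S" "u' \<in> S" "u \<noteq> u'" "g u = g u'" for u u'
  proof -
    obtain w where w: "w \<in> W" "g u = g w" using wit su(1) by blast
    have "\<not> LL u u' \<le> 2 * int p" using col su(3,4) by blast
    then have "LL u u' > 2 * int p" by simp
    then have f3: "LL u u' \<ge> 4*h+2*q-1" using farc by linarith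
    have f1: "LL u w \<ge> 4*h+2*q-1" using far su(1) w by blast
    have f2: "LL u' w \<ge> 4*h+2*q-1" using far su(2,4) w by simp
    have Lu: "LL (0,0) u = 2*h+q" "LL (0,0) u' = 2*h+q" using su(1,2) kq unfolding S_def Sph_def by auto
    have Lw: "LL (0,0) w = 2*h+q-1" using w(1) kq unfolding W_def Sph_def by auto
    show ?thesis by (rule GLv[OF kq(2) kq(3) Lu(1) Lu(2) Lw f1 f2 f3 su(3)])
  qed
  have TS: "T1 h q \<subseteq> S" "T2 h q \<subseteq> S" using T_in_Sph[OF kq(3) kq(2)] kq(1) unfolding S_def by auto
  have Tc: "card (T1 h q) = 3" "card (T2 h q) = 3" "T1 h q \<inter> T2 h q = {}" using T_card[OF kq(3) kq(2)] by auto
  have cardT: "card (g ` T) \<ge> 2" if T: "T = T1 h q \<or> T = T2 h q" for T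
  proof (rule ccontr)
    assume "\<not> card (g ` T) \<ge> 2"
    then have c1: "card (g ` T) \<le> 1" by simp
    obtain c d e where cde: "(c = 2*h+q \<and> d = -h \<and> e = -(h+q)) \<or> (c = -(2*h+q) \<and> d = h \<and> e = h+q)"
      and Teq: "T = {(0,c), (-h,e), (h+q,d)}" using T unfolding T1_def T2_def by blast
    have TS': "T \<subseteq> S" using T TS by blast
    have fin: "finite (g ` T)" using Teq by simp
    have gall: "g v = g (0,c)" if "v \<in> T" for v
    proof -
      have c0T: "(0,c) \<in> T" using Teq by simp
      have "g v \<in> g ` T" by (rule imageI[OF that])
      moreover have "g (0,c) \<in> g ` T" using c0T by (rule imageI)
      moreover have "\<forall>a\<in>g ` T. \<forall>b\<in>g ` T. a = b"
      proof -
        have "card (g ` T) \<le> Suc 0" using c1 by simp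
        then show ?thesis by (rule card_le_Suc0_iff_eq[OF fin, THEN iffD1])
      qed
      ultimately show ?thesis by blast
    qed
    obtain w where w: "w \<in> W" "g (0,c) = g w" using wit TS' Teq by blast
    have fv: "LL v w \<ge> 4*h+2*q-1" if "v \<in> T" for v
      using far[of v w] that TS' w gall by auto
    have Lw: "LL (0,0) w = 2*h+q-1" using w(1) kq unfolding W_def Sph_def by auto
    show False by (rule tri_v[OF kq(2) kq(3) Lw cde]) (use fv Teq in auto)
  qed
  have finS: "finite S" and cS: "card S = nat (6*h+3*q)" using card_Sph[OF _ kq(2), of h] kq unfolding S_def by auto
  have finW: "finite W" and cW: "card W = nat (6*h'+3*q')" using card_Sph[OF kq'(3) kq'(2)] kq' unfolding W_def by auto
  define C where "C = T1 h q \<union> T2 h q"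
  have CS: "C \<subseteq> S" using TS unfolding C_def by auto
  have cC: "card C = 6" unfolding C_def using Tc card_Un_disjoint[of "T1 h q" "T2 h q"] unfolding T1_def T2_def by simp
  have cSC: "card (S - C) = card S - 6" using card_Diff_subset[OF _ CS] cC finS finite_subset[OF CS] by simp
  have injSC: "inj_on g (S - C)"
  proof (rule inj_onI)
    fix u u' assume "u \<in> S - C" "u' \<in> S - C" "g u = g u'"
    then show "u = u'" using same[of u u'] unfolding C_def by blast
  qed
  have d1: "g ` (S - C) \<inter> g ` C = {}"
  proof -
    { fix u c assume "u \<in> S - C" "c \<in> C" "g u = g c"
      then have False using same[of u c] CS unfolding C_def by blast }
    then show ?thesis by blast
  qed
  have d2: "g ` T1 h q \<inter> g ` T2 h q = {}"
  proof -
    { fix u c assume "u \<in> T1 h q" "c \<in> T2 h q" "g u = g c"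
      then have False using same[of u c] TS Tc(3) by blast }
    then show ?thesis by blast
  qed
  have finT: "finite (T1 h q)" "finite (T2 h q)" unfolding T1_def T2_def by auto
  have "card (g ` C) = card (g ` T1 h q) + card (g ` T2 h q)"
    unfolding C_def image_Un by (rule card_Un_disjoint) (use finT d2 in auto)
  moreover have "card (g ` T1 h q) \<ge> 2" by (rule cardT) simp
  moreover have "card (g ` T2 h q) \<ge> 2" by (rule cardT) simp
  ultimately have gC: "card (g ` C) \<ge> 4" by linarith
  have "card (g ` S) \<ge> card (g ` (S - C) \<union> g ` C)"
    by (rule card_mono) (use finS CS in auto)
  also have "card (g ` (S - C) \<union> g ` C) = card (g ` (S - C)) + card (g ` C)"
    by (rule card_Un_disjoint) (use finS finite_subset[OF CS finS] d1 in auto)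
  also have "card (g ` (S - C)) = card (S - C)" by (rule card_image[OF injSC])
  finally have lo: "card (g ` S) \<ge> card S - 6 + 4" using cSC gC by linarith
  have "g ` S \<subseteq> g ` W" using wit by blast
  then have "card (g ` S) \<le> card (g ` W)" by (rule card_mono[OF finite_imageI[OF finW]])
  also have "\<dots> \<le> card W" by (rule card_image_le[OF finW])
  finally have up: "card (g ` S) \<le> card W" .
  have "nat (6*h+3*q) = nat (6*h'+3*q') + 3" using kq kq' by linarith
  then show False using lo up cS cW kq by linarith
qed


end
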